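(* Let $n$ be odd. The permutation representation of $S_n$ over $\mathbb{C}$ arising from the action of $S_n$ (by $\pi\cdot S=\pi(S)$) on the set of even-sized subsets of $\{1,\dots,n\}$ does not unite conjugacy classes.
   Context: A representation $T$ of $G$ unites conjugacy classes if there are non-conjugate $\sigma,\tau\in G$ with $T(\sigma),T(\tau)$ similar matrices. *)

theory Defs
  imports Complex_Main "HOL-Combinatorics.Permutations"
begin

text \<open>Square complex matrices whose rows and columns are indexed by a finite set X,
  represented as functions X => X => complex (entries outside X are irrelevant).\<close>

definition mat_mult_on :: "'i set \<Rightarrow> ('i \<Rightarrow> 'i \<Rightarrow> complex) \<Rightarrow> ('i \<Rightarrow> 'i \<Rightarrow> complex) \<Rightarrow> ('i \<Rightarrow> 'i \<Rightarrow> complex)" where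
  "mat_mult_on X A B = (\<lambda>i j. \<Sum>k\<in>X. A i k * B k j)"

definition mat_id_on :: "'i set \<Rightarrow> 'i \<Rightarrow> 'i \<Rightarrow> complex" where
  "mat_id_on X = (\<lambda>i j. if i = j then 1 else 0)"

definition mat_eq_on :: "'i set \<Rightarrow> ('i \<Rightarrow> 'i \<Rightarrow> complex) \<Rightarrow> ('i \<Rightarrow> 'i \<Rightarrow> complex) \<Rightarrow> bool" where
  "mat_eq_on X A B \<longleftrightarrow> (\<forall>i\<in>X. \<forall>j\<in>X. A i j = B i j)"

definition similar_on :: "'i set \<Rightarrow> ('i \<Rightarrow> 'i \<Rightarrow> complex) \<Rightarrow> ('i \<Rightarrow> 'i \<Rightarrow> complex) \<Rightarrow> bool" where
  "similar_on X A B \<longleftrightarrow> (\<exists>P Q.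
      mat_eq_on X (mat_mult_on X P Q) (mat_id_on X) \<and>
      mat_eq_on X (mat_mult_on X Q P) (mat_id_on X) \<and>
      mat_eq_on X (mat_mult_on X (mat_mult_on X P A) Q) B)"

definition conj_Sn :: "nat \<Rightarrow> (nat \<Rightarrow> nat) \<Rightarrow> (nat \<Rightarrow> nat) \<Rightarrow> bool" where
  "conj_Sn n \<sigma> \<tau> \<longleftrightarrow> (\<exists>g. g permutes {1..n} \<and> \<tau> = g \<circ> \<sigma> \<circ> inv g)"

definition unites_conj_classes :: "nat \<Rightarrow> 'i set \<Rightarrow> ((nat \<Rightarrow> nat) \<Rightarrow> 'i \<Rightarrow> 'i \<Rightarrow> complex) \<Rightarrow> bool" where
  "unites_conj_classes n X T \<longleftrightarrow> (\<exists>\<sigma> \<tau>. \<sigma> permutes {1..n} \<and> \<tau> permutes {1..n} \<and>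
      \<not> conj_Sn n \<sigma> \<tau> \<and> similar_on X (T \<sigma>) (T \<tau>))"

definition even_subsets :: "nat \<Rightarrow> nat set set" where
  "even_subsets n = {S. S \<subseteq> {1..n} \<and> even (card S)}"

definition even_subset_rep :: "(nat \<Rightarrow> nat) \<Rightarrow> nat set \<Rightarrow> nat set \<Rightarrow> complex" where
  "even_subset_rep \<pi> = (\<lambda>S R. if S = \<pi> ` R then 1 else 0)"

end

theory Submission
  imports Defs "HOL-Library.Multiset" "HOL-Number_Theory.Number_Theory"
begin

definition orb :: "('a \<Rightarrow> 'a) \<Rightarrow> 'a \<Rightarrow> 'a set" where
  "orb f x = range (\<lambda>i. (f ^^ i) x)"

lemma funpow_in_inv: "f ` A \<subseteq> A \<Longrightarrow> x \<in> A \<Longrightarrow> (f ^^ i) x \<in> A"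
  by (induction i) auto

lemma orb_sub: "f ` A \<subseteq> A \<Longrightarrow> x \<in> A \<Longrightarrow> orb f x \<subseteq> A"
  unfolding orb_def by (auto intro: funpow_in_inv)

lemma orb_self: "x \<in> orb f x"
  unfolding orb_def by (metis funpow_0 rangeI)

lemma funpow_Suc_apply: "(f ^^ Suc i) x = f ((f ^^ i) x)" by simp

lemma orb_img:
  assumes "inj f" "finite (orb f x)"
  shows "f ` orb f x = orb f x"
proof -
  have sub: "f ` orb f x \<subseteq> orb f x"
    unfolding orb_def by (auto simp del: funpow.simps simp: funpow_Suc_apply[symmetric])
  have "card (f ` orb f x) = card (orb f x)"
    using assms by (simp add: card_image inj_on_subset)
  then show ?thesis using card_subset_eq[OF assms(2) sub] by simp
qed

lemma orb_period:
  assumes "inj f" "finite (orb f x)"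
  shows "\<exists>p>0. (f ^^ p) x = x"
proof -
  have "x \<in> f ` orb f x" using orb_img[OF assms] orb_self by metis
  then obtain y where "y \<in> orb f x" "x = f y" by blast
  then obtain i where "x = f ((f ^^ i) x)" unfolding orb_def by blast
  then have "(f ^^ Suc i) x = x" by (simp del: funpow.simps add: funpow_Suc_apply)
  then show ?thesis by blast
qed

lemma funpow_mult_period:
  assumes "(f ^^ p) x = x" shows "(f ^^ (p * m)) x = x"
proof (induction m)
  case (Suc m)
  have "(f ^^ (p * Suc m)) x = (f ^^ p) ((f ^^ (p * m)) x)"
    by (simp only: mult_Suc_right funpow_add comp_apply)
  then show ?case using Suc assms by simp
qed simp

lemma funpow_mod_period:
  assumes "(f ^^ p) x = x" shows "(f ^^ i) x = (f ^^ (i mod p)) x"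
proof -
  have "(f ^^ i) x = (f ^^ (i mod p)) ((f ^^ (p * (i div p))) x)"
    by (metis funpow_add comp_apply mod_mult_div_eq)
  then show ?thesis using funpow_mult_period[OF assms] by simp
qed

lemma funpow_inj_cancel:
  fixes f :: "'a \<Rightarrow> 'a"
  assumes "inj f" "(f ^^ i) a = (f ^^ i) b" shows "a = b"
  using assms(2)
proof (induction i arbitrary: a b)
  case (Suc i)
  have "f ((f ^^ i) a) = f ((f ^^ i) b)" using Suc.prems by simp
  then have "(f ^^ i) a = (f ^^ i) b" using assms(1) unfolding inj_def by blast
  then show ?case using Suc.IH by blast
qed simp

lemma orb_facts:
  assumes "inj f" "finite (orb f x)"
  shows "card (orb f x) > 0 \<and> (\<forall>i j. (f ^^ i) x = (f ^^ j) x \<longleftrightarrow> i mod card (orb f x) = j mod card (orb f x))"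
proof -
  define p where "p = (LEAST p. p > 0 \<and> (f ^^ p) x = x)"
  have pp: "p > 0 \<and> (f ^^ p) x = x"
    unfolding p_def using orb_period[OF assms] by (rule LeastI_ex)
  have pmin: "\<And>q. 0 < q \<Longrightarrow> q < p \<Longrightarrow> (f ^^ q) x \<noteq> x"
    unfolding p_def using not_less_Least by blast
  have injp: "inj_on (\<lambda>i. (f ^^ i) x) {..<p}"
  proof (rule inj_onI, rule ccontr)
    fix i j assume ij: "i \<in> {..<p}" "j \<in> {..<p}" "(f ^^ i) x = (f ^^ j) x" "i \<noteq> j"
    { fix a b assume ab: "a < b" "b < p" "(f ^^ a) x = (f ^^ b) x"
      then have "(f ^^ a) x = (f ^^ a) ((f ^^ (b - a)) x)"
        by (metis comp_apply funpow_add le_add_diff_inverse less_imp_le_nat)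
      then have "(f ^^ (b - a)) x = x" using funpow_inj_cancel[OF assms(1)] by metis
      moreover have "0 < b - a" "b - a < p" using ab by auto
      ultimately have False using pmin by blast }
    then show False using ij by (metis lessThan_iff linorder_neqE_nat)
  qed
  have oeq: "orb f x = (\<lambda>i. (f ^^ i) x) ` {..<p}"
  proof
    show "orb f x \<subseteq> (\<lambda>i. (f ^^ i) x) ` {..<p}"
    proof
      fix z assume "z \<in> orb f x"
      then obtain i where z: "z = (f ^^ i) x" unfolding orb_def by blast
      have "z = (f ^^ (i mod p)) x" using z funpow_mod_period[OF conjunct2[OF pp]] by simp
      moreover have "i mod p \<in> {..<p}" using pp by simp
      ultimately show "z \<in> (\<lambda>i. (f ^^ i) x) ` {..<p}" by blast
    qed
  qed (auto simp: orb_def)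
  have cp: "card (orb f x) = p" using oeq injp by (simp add: card_image)
  have "(f ^^ i) x = (f ^^ j) x \<longleftrightarrow> i mod p = j mod p" for i j
  proof
    assume "(f ^^ i) x = (f ^^ j) x"
    then have "(f ^^ (i mod p)) x = (f ^^ (j mod p)) x"
      using funpow_mod_period[OF conjunct2[OF pp]] by metis
    then show "i mod p = j mod p" using injp pp by (auto dest: inj_onD)
  next
    assume "i mod p = j mod p"
    then show "(f ^^ i) x = (f ^^ j) x"
      using funpow_mod_period[OF conjunct2[OF pp]] by metis
  qed
  then show ?thesis using cp pp by simp
qed

lemma orb_same:
  assumes "inj f" "finite (orb f x)" "y \<in> orb f x"
  shows "orb f y = orb f x"
proof -
  obtain i where y: "y = (f ^^ i) x" using assms(3) unfolding orb_def by auto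
  have sub: "orb f y \<subseteq> orb f x"
    unfolding orb_def y by (auto simp: funpow_add[symmetric, THEN fun_cong, simplified comp_def])
  define d where "d = card (orb f x)"
  have F: "d > 0" "\<And>i j. (f ^^ i) x = (f ^^ j) x \<longleftrightarrow> i mod d = j mod d"
    using orb_facts[OF assms(1,2)] d_def by auto
  have "(f ^^ (d - i mod d)) y = (f ^^ (d - i mod d + i)) x"
    unfolding y by (simp add: funpow_add)
  also have "\<dots> = (f ^^ 0) x"
    using F(1) by (subst F(2)) (metis add.commute add_diff_inverse_nat mod_add_right_eq mod_less_divisor mod_self not_less0 verit_comp_simplify1(3) zero_less_diff mod_0 less_imp_le_nat)
  finally have "x \<in> orb f y" unfolding orb_def by (metis funpow_0 rangeI)
  then have "orb f x \<subseteq> orb f y"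
    unfolding orb_def by (auto) (metis funpow_add comp_apply rangeI)
  with sub show ?thesis by blast
qed

lemma img_funpow_inv:
  fixes f :: "'a \<Rightarrow> 'a"
  assumes "f ` C = C" shows "(f ^^ k) ` C = C"
proof (induction k)
  case (Suc k)
  have "(f ^^ Suc k) ` C = f ` ((f ^^ k) ` C)" by (simp add: image_comp)
  then show ?case using Suc assms by simp
qed simp

lemma periodic_mult:
  fixes c :: nat
  assumes "\<forall>i. P (i + m) \<longleftrightarrow> P i" shows "P (i + m * c) \<longleftrightarrow> P i"
proof (induction c)
  case (Suc c)
  have "P (i + m * Suc c) \<longleftrightarrow> P ((i + m * c) + m)" by (simp add: algebra_simps)
  then show ?case using Suc assms by simp
qed simp

lemma cycle_count:
  fixes f :: "'a \<Rightarrow> 'a"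
  assumes inj: "inj f" and fin: "finite (orb f x)" and k0: "k > 0"
  shows "card {S. S \<subseteq> orb f x \<and> (f ^^ k) ` S = S} = 2 ^ gcd (card (orb f x)) k"
proof -
  define C where "C = orb f x"
  define d where "d = card C"
  define g where "g = gcd d k"
  define e where "e = (\<lambda>i. (f ^^ i) x)"
  define \<pi> where "\<pi> = f ^^ k"
  have d0: "d > 0" and eq: "\<And>i j. e i = e j \<longleftrightarrow> i mod d = j mod d"
    using orb_facts[OF inj fin] unfolding d_def C_def e_def by auto
  have g0: "g > 0" using d0 g_def by simp
  have gd: "g dvd d" and gk: "g dvd k" unfolding g_def by auto
  have Ce: "C = range e" unfolding C_def orb_def e_def by simp
  have ek: "e (i + k) = \<pi> (e i)" for i
    unfolding e_def \<pi>_def by (simp only: add.commute[of i k] funpow_add comp_apply)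
  have injk: "inj \<pi>" unfolding \<pi>_def using inj_fn[OF inj] .
  have key: "e i = e j \<Longrightarrow> i mod g = j mod g" for i j
    using eq[of i j] mod_mod_cancel[OF gd] by metis
  have step1: "\<pi> ` S = S \<longleftrightarrow> (\<forall>i. e (i + k) \<in> S \<longleftrightarrow> e i \<in> S)" if SC: "S \<subseteq> C" for S
  proof
    assume H: "\<pi> ` S = S"
    show "\<forall>i. e (i + k) \<in> S \<longleftrightarrow> e i \<in> S"
    proof
      fix i
      show "e (i + k) \<in> S \<longleftrightarrow> e i \<in> S"
      proof
        assume "e (i + k) \<in> S"
        then have "\<pi> (e i) \<in> \<pi> ` S" using H ek by simp
        then show "e i \<in> S" using injk by (auto dest: injD)
      next
        assume "e i \<in> S" then show "e (i + k) \<in> S" using H ek by blast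
      qed
    qed
  next
    assume H: "\<forall>i. e (i + k) \<in> S \<longleftrightarrow> e i \<in> S"
    show "\<pi> ` S = S"
    proof
      show "\<pi> ` S \<subseteq> S"
      proof
        fix z assume "z \<in> \<pi> ` S"
        then obtain y where y: "y \<in> S" "z = \<pi> y" by blast
        then obtain i where "y = e i" using SC Ce by blast
        then show "z \<in> S" using y H ek by metis
      qed
    next
      show "S \<subseteq> \<pi> ` S"
      proof
        fix z assume zS: "z \<in> S"
        then obtain i where zi: "z = e i" using SC Ce by blast
        define j where "j = i + d * k - k"
        have kk: "k \<le> d * k" using d0 by simp
        have jk: "j + k = i + d * k" unfolding j_def using kk by linarith
        have "e (j + k) = e i" unfolding jk using eq by simp
        then have "e j \<in> S" and "\<pi> (e j) = z" using H zS zi ek by metis+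
        then show "z \<in> \<pi> ` S" by blast
      qed
    qed
  qed
  have step2: "(\<forall>i. e (i + k) \<in> S \<longleftrightarrow> e i \<in> S) \<longleftrightarrow> (\<forall>i. e (i + g) \<in> S \<longleftrightarrow> e i \<in> S)" for S
  proof
    assume H: "\<forall>i. e (i + k) \<in> S \<longleftrightarrow> e i \<in> S"
    obtain a b where ab: "k * a = d * b + gcd k d" using bezout_nat[of k d] k0 by auto
    have gg: "gcd k d = g" unfolding g_def by (simp add: gcd.commute)
    show "\<forall>i. e (i + g) \<in> S \<longleftrightarrow> e i \<in> S"
    proof
      fix i
      have "e (i + g) = e (i + g + d * b)" using eq by simp
      also have "i + g + d * b = i + k * a" using ab gg by simp
      finally have "e (i + g) = e (i + k * a)" .
      moreover have "e (i + k * a) \<in> S \<longleftrightarrow> e i \<in> S"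
        using periodic_mult[where P = "\<lambda>i. e i \<in> S", OF H] .
      ultimately show "e (i + g) \<in> S \<longleftrightarrow> e i \<in> S" by simp
    qed
  next
    assume H: "\<forall>i. e (i + g) \<in> S \<longleftrightarrow> e i \<in> S"
    obtain c where c: "k = g * c" using gk by blast
    show "\<forall>i. e (i + k) \<in> S \<longleftrightarrow> e i \<in> S"
      unfolding c using periodic_mult[where P = "\<lambda>i. e i \<in> S", OF H] by blast
  qed
  have step3: "e i \<in> S \<longleftrightarrow> e (i mod g) \<in> S" if H: "\<forall>i. e (i + g) \<in> S \<longleftrightarrow> e i \<in> S" for S i
  proof -
    have "i = i mod g + g * (i div g)" by simp
    then show ?thesis using periodic_mult[where P = "\<lambda>i. e i \<in> S", OF H, of "i mod g" "i div g"] by metis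
  qed
  define A where "A = {S. S \<subseteq> C \<and> \<pi> ` S = S}"
  have A_alt: "A = {S. S \<subseteq> C \<and> (\<forall>i. e (i + g) \<in> S \<longleftrightarrow> e i \<in> S)}"
    unfolding A_def
  proof (rule Collect_cong)
    fix S
    show "(S \<subseteq> C \<and> \<pi> ` S = S) \<longleftrightarrow> (S \<subseteq> C \<and> (\<forall>i. e (i + g) \<in> S \<longleftrightarrow> e i \<in> S))"
    proof (cases "S \<subseteq> C")
      case True
      then show ?thesis using step1[OF True] step2[of S] by simp
    qed simp
  qed
  define \<Phi> where "\<Phi> S = {i. i < g \<and> e i \<in> S}" for S
  define \<Psi> where "\<Psi> T = e ` {i. i mod g \<in> T}" for T
  have memPsi: "e i \<in> \<Psi> T \<longleftrightarrow> i mod g \<in> T" for i T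
  proof
    assume "e i \<in> \<Psi> T"
    then obtain j where "e i = e j" "j mod g \<in> T" unfolding \<Psi>_def by blast
    then show "i mod g \<in> T" using key by metis
  next
    assume "i mod g \<in> T"
    then show "e i \<in> \<Psi> T" unfolding \<Psi>_def by blast
  qed
  have "bij_betw \<Phi> A (Pow {..<g})"
  proof (rule bij_betw_byWitness[where f' = \<Psi>])
    show "\<forall>S\<in>A. \<Psi> (\<Phi> S) = S"
    proof
      fix S assume "S \<in> A"
      then have SC: "S \<subseteq> C" and H: "\<forall>i. e (i + g) \<in> S \<longleftrightarrow> e i \<in> S" unfolding A_alt by auto
      show "\<Psi> (\<Phi> S) = S"
      proof
        show "\<Psi> (\<Phi> S) \<subseteq> S"
          unfolding \<Psi>_def \<Phi>_def using step3[OF H] by auto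
        show "S \<subseteq> \<Psi> (\<Phi> S)"
        proof
          fix z assume "z \<in> S"
          moreover then obtain i where "z = e i" using SC Ce by blast
          ultimately show "z \<in> \<Psi> (\<Phi> S)"
            unfolding \<Phi>_def using memPsi step3[OF H] g0 by auto
        qed
      qed
    qed
    show "\<forall>T\<in>Pow {..<g}. \<Phi> (\<Psi> T) = T"
      unfolding \<Phi>_def using memPsi by auto
    show "\<Phi> ` A \<subseteq> Pow {..<g}" unfolding \<Phi>_def by auto
    show "\<Psi> ` Pow {..<g} \<subseteq> A"
    proof
      fix S assume "S \<in> \<Psi> ` Pow {..<g}"
      then obtain T where S: "S = \<Psi> T" by blast
      have "S \<subseteq> C" unfolding S \<Psi>_def Ce by auto
      moreover have "\<forall>i. e (i + g) \<in> S \<longleftrightarrow> e i \<in> S" unfolding S memPsi by simp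
      ultimately show "S \<in> A" unfolding A_alt by blast
    qed
  qed
  then have "card A = card (Pow {..<g})" by (rule bij_betw_same_card)
  also have "\<dots> = 2 ^ g" by (simp add: card_Pow)
  finally show ?thesis unfolding A_def \<pi>_def C_def g_def d_def .
qed

definition cycs :: "('a \<Rightarrow> 'a) \<Rightarrow> 'a set \<Rightarrow> 'a set set" where
  "cycs f A = orb f ` A"

definition invs :: "('a \<Rightarrow> 'a) \<Rightarrow> 'a set \<Rightarrow> 'a set set" where
  "invs p A = {S. S \<subseteq> A \<and> p ` S = S}"

lemma invs_split:
  fixes p :: "'a \<Rightarrow> 'a"
  assumes inj: "inj p" and pC: "p ` C = C" and CA: "C \<subseteq> A" and pA: "p ` A = A"
  shows "card (invs p A) = card (invs p C) * card (invs p (A - C))"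
proof -
  have pin: "p y \<in> C \<longleftrightarrow> y \<in> C" for y by (metis pC inj_image_mem_iff[OF inj])
  have "bij_betw (\<lambda>S. (S \<inter> C, S - C)) (invs p A) (invs p C \<times> invs p (A - C))"
  proof (rule bij_betw_byWitness[where f' = "\<lambda>(P, Q). P \<union> Q"])
    show "\<forall>S\<in>invs p A. (case (S \<inter> C, S - C) of (P, Q) \<Rightarrow> P \<union> Q) = S" by auto
    show "\<forall>PQ\<in>invs p C \<times> invs p (A - C). (\<lambda>S. (S \<inter> C, S - C)) (case PQ of (P, Q) \<Rightarrow> P \<union> Q) = PQ"
      unfolding invs_def by auto
    show "(\<lambda>S. (S \<inter> C, S - C)) ` invs p A \<subseteq> invs p C \<times> invs p (A - C)"
      unfolding invs_def by (auto simp: image_Int[OF inj] image_set_diff[OF inj] pC pin)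
    show "(\<lambda>(P, Q). P \<union> Q) ` (invs p C \<times> invs p (A - C)) \<subseteq> invs p A"
      unfolding invs_def using CA by (auto simp: image_Un)
  qed
  then show ?thesis by (simp add: bij_betw_same_card card_cartesian_product)
qed

lemma remove_cycle:
  fixes f :: "'a \<Rightarrow> 'a"
  assumes inj: "inj f" and fA: "f ` A = A" and fin: "finite A" and xA: "x \<in> A"
  shows "orb f x \<subseteq> A" "finite (orb f x)" "f ` orb f x = orb f x"
    "f ` (A - orb f x) = A - orb f x"
    "cycs f (A - orb f x) = cycs f A - {orb f x}" "orb f x \<in> cycs f A"
proof -
  show sub: "orb f x \<subseteq> A" using orb_sub[of f A x] fA xA by simp
  show finC: "finite (orb f x)" using sub fin finite_subset by blast
  show img: "f ` orb f x = orb f x" using orb_img[OF inj finC] .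
  show "f ` (A - orb f x) = A - orb f x" using image_set_diff[OF inj] img fA by simp
  show "orb f x \<in> cycs f A" unfolding cycs_def using xA by blast
  have finy: "finite (orb f y)" if "y \<in> A" for y
    using orb_sub[of f A y] fA that fin finite_subset by blast
  show "cycs f (A - orb f x) = cycs f A - {orb f x}"
  proof
    show "cycs f (A - orb f x) \<subseteq> cycs f A - {orb f x}"
      unfolding cycs_def using orb_self by fastforce
    show "cycs f A - {orb f x} \<subseteq> cycs f (A - orb f x)"
    proof
      fix D assume "D \<in> cycs f A - {orb f x}"
      then obtain y where y: "y \<in> A" "D = orb f y" "D \<noteq> orb f x" unfolding cycs_def by blast
      then have "y \<notin> orb f x" using orb_same[OF inj finC] by metis
      then show "D \<in> cycs f (A - orb f x)" unfolding cycs_def using y by blast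
    qed
  qed
qed

lemma invs_count:
  fixes f :: "'a \<Rightarrow> 'a"
  assumes "inj f" "f ` A = A" "finite A" "k > 0"
  shows "card (invs (f ^^ k) A) = 2 ^ (\<Sum>C\<in>cycs f A. gcd (card C) k)"
  using assms(2,3)
proof (induction "card A" arbitrary: A rule: less_induct)
  case less
  show ?case
  proof (cases "A = {}")
    case True
    have "invs (f ^^ k) A = {{}}" unfolding invs_def True by auto
    then show ?thesis by (simp add: True cycs_def)
  next
    case False
    then obtain x where xA: "x \<in> A" by blast
    define C where "C = orb f x"
    note R = remove_cycle[OF assms(1) less.prems xA, folded C_def]
    have "A - C \<subset> A" using xA orb_self[of x f] unfolding C_def by blast
    then have lt: "card (A - C) < card A" using less.prems(2) by (rule psubset_card_mono[rotated])
    have finAC: "finite (A - C)" using less.prems(2) by simp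
    have IH: "card (invs (f ^^ k) (A - C)) = 2 ^ (\<Sum>D\<in>cycs f (A - C). gcd (card D) k)"
      by (rule less.hyps[OF lt R(4) finAC])
    have inj': "inj (f ^^ k)" using inj_fn[OF assms(1)] .
    have sp: "card (invs (f ^^ k) A) = card (invs (f ^^ k) C) * card (invs (f ^^ k) (A - C))"
      using invs_split[OF inj' img_funpow_inv[OF R(3)] R(1) img_funpow_inv[OF less.prems(1)]] .
    have cc: "card (invs (f ^^ k) C) = 2 ^ gcd (card C) k"
      unfolding invs_def C_def using cycle_count[OF assms(1) R(2)[unfolded C_def] assms(4)] .
    have fc: "finite (cycs f A)" unfolding cycs_def using less.prems(2) by simp
    have ss: "(\<Sum>D\<in>cycs f A. gcd (card D) k) = gcd (card C) k + (\<Sum>D\<in>cycs f (A - C). gcd (card D) k)"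
      unfolding R(5) by (rule sum.remove[OF fc R(6)])
    show ?thesis by (simp only: sp cc IH ss power_add)
  qed
qed

lemma mset_remove_img:
  assumes "finite S" "C \<in> S"
  shows "image_mset \<phi> (mset_set (S - {C})) = image_mset \<phi> (mset_set S) - {#\<phi> C#}"
proof -
  have e: "mset_set S = add_mset C (mset_set (S - {C}))" by (rule mset_set.remove) (use assms in auto)
  have aux: "image_mset \<phi> M = image_mset \<phi> (add_mset C M) - {#\<phi> C#}" for M :: "'a multiset"
    by (simp only: image_mset_add_mset add_mset_remove_trivial)
  show ?thesis unfolding e by (rule aux)
qed

lemma finite_cycs: "finite A \<Longrightarrow> finite (cycs f A)" unfolding cycs_def by simp

lemma iso:
  fixes f h :: "'a \<Rightarrow> 'a"
  assumes injf: "inj f" and injh: "inj h"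
  shows "f ` A = A \<Longrightarrow> finite A \<Longrightarrow> h ` B = B \<Longrightarrow> finite B \<Longrightarrow>
    image_mset card (mset_set (cycs f A)) = image_mset card (mset_set (cycs h B)) \<Longrightarrow>
    \<exists>g. bij_betw g A B \<and> (\<forall>z\<in>A. g (f z) = h (g z))"
proof (induction "card A" arbitrary: A B rule: less_induct)
  case less
  show ?case
  proof (cases "A = {}")
    case True
    then have "image_mset card (mset_set (cycs h B)) = {#}" using less.prems(5) by (simp add: cycs_def)
    then have "cycs h B = {}" using finite_cycs[OF less.prems(4)] by (simp add: mset_set_empty_iff)
    then have "B = {}" unfolding cycs_def by simp
    then show ?thesis using True by (auto simp: bij_betw_def)
  next
    case False
    then obtain x where xA: "x \<in> A" by blast
    define C where "C = orb f x"
    define d where "d = card C"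
    note R = remove_cycle[OF injf less.prems(1,2) xA, folded C_def]
    have "d \<in># image_mset card (mset_set (cycs f A))"
      using R(6) finite_cycs[OF less.prems(2)] unfolding d_def by simp
    then have "d \<in># image_mset card (mset_set (cycs h B))" using less.prems(5) by simp
    then obtain D where D: "D \<in> cycs h B" "card D = d" using finite_cycs[OF less.prems(4)] by auto
    then obtain y where yB: "y \<in> B" and Dy: "D = orb h y" unfolding cycs_def by blast
    note RB = remove_cycle[OF injh less.prems(3,4) yB, folded Dy]
    have e1: "image_mset card (mset_set (cycs f (A - C))) = image_mset card (mset_set (cycs f A)) - {#card C#}"
      unfolding R(5) by (rule mset_remove_img[OF finite_cycs[OF less.prems(2)] R(6)])
    have e2: "image_mset card (mset_set (cycs h (B - D))) = image_mset card (mset_set (cycs h B)) - {#card D#}"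
      unfolding RB(5) by (rule mset_remove_img[OF finite_cycs[OF less.prems(4)] RB(6)])
    have cDC: "card D = card C" using D(2) d_def by simp
    have ms: "image_mset card (mset_set (cycs f (A - C))) = image_mset card (mset_set (cycs h (B - D)))"
      unfolding e1 e2 cDC less.prems(5) ..
    have "A - C \<subset> A" using xA orb_self[of x f] unfolding C_def by blast
    then have lt: "card (A - C) < card A" using less.prems(2) by (rule psubset_card_mono[rotated])
    have finAC: "finite (A - C)" using less.prems(2) by simp
    have finBD: "finite (B - D)" using less.prems(4) by simp
    have "\<exists>g. bij_betw g (A - C) (B - D) \<and> (\<forall>z\<in>A - C. g (f z) = h (g z))"
      by (rule less.hyps[OF lt R(4) finAC RB(4) finBD ms])
    then obtain g0 where g0: "bij_betw g0 (A - C) (B - D)" "\<forall>z\<in>A - C. g0 (f z) = h (g0 z)"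
      by blast
    have Fx: "d > 0" "\<And>i j. (f ^^ i) x = (f ^^ j) x \<longleftrightarrow> i mod d = j mod d"
      using orb_facts[OF injf R(2)[unfolded C_def]] unfolding d_def C_def by auto
    have Fy: "\<And>i j. (h ^^ i) y = (h ^^ j) y \<longleftrightarrow> i mod d = j mod d"
      using orb_facts[OF injh RB(2)[unfolded Dy]] D(2) unfolding Dy by auto
    define g1 where "g1 z = (h ^^ (SOME i. z = (f ^^ i) x)) y" for z
    have g1f: "g1 ((f ^^ j) x) = (h ^^ j) y" for j
    proof -
      have "(f ^^ j) x = (f ^^ (SOME i. (f ^^ j) x = (f ^^ i) x)) x"
        by (rule someI[of "\<lambda>i. (f ^^ j) x = (f ^^ i) x" j]) simp
      then show ?thesis unfolding g1_def using Fx(2) Fy by metis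
    qed
    have Crange: "C = range (\<lambda>j. (f ^^ j) x)" unfolding C_def orb_def by simp
    have Drange: "D = range (\<lambda>j. (h ^^ j) y)" unfolding Dy orb_def by simp
    define g where "g z = (if z \<in> C then g1 z else g0 z)" for z
    have bC: "bij_betw g C D"
    proof -
      have "inj_on g1 C"
      proof (rule inj_onI)
        fix z1 z2 assume "z1 \<in> C" "z2 \<in> C" "g1 z1 = g1 z2"
        then obtain i j where "z1 = (f ^^ i) x" "z2 = (f ^^ j) x" "(h ^^ i) y = (h ^^ j) y"
          unfolding Crange using g1f by auto
        then show "z1 = z2" using Fx(2) Fy by metis
      qed
      moreover have "g1 ` C = D" unfolding Crange Drange image_image g1f by simp
      ultimately have "bij_betw g1 C D" unfolding bij_betw_def by simp
      then show ?thesis by (rule bij_betw_cong[THEN iffD1, rotated]) (simp add: g_def)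
    qed
    have bAC: "bij_betw g (A - C) (B - D)"
      using g0(1) by (rule bij_betw_cong[THEN iffD1, rotated]) (simp add: g_def)
    have "bij_betw g (C \<union> (A - C)) (D \<union> (B - D))"
      by (rule bij_betw_combine[OF bC bAC]) blast
    moreover have "C \<union> (A - C) = A" "D \<union> (B - D) = B" using R(1) RB(1) by auto
    ultimately have bij: "bij_betw g A B" by simp
    have "\<forall>z\<in>A. g (f z) = h (g z)"
    proof
      fix z assume zA: "z \<in> A"
      show "g (f z) = h (g z)"
      proof (cases "z \<in> C")
        case True
        then obtain j where zj: "z = (f ^^ j) x" unfolding Crange by blast
        have fz: "f z = (f ^^ Suc j) x" unfolding zj by simp
        have "f z \<in> C" using True R(3) by blast
        then have "g (f z) = g1 (f z)" unfolding g_def by simp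
        also have "\<dots> = g1 ((f ^^ Suc j) x)" by (simp only: fz)
        also have "\<dots> = (h ^^ Suc j) y" by (rule g1f)
        also have "\<dots> = h (g z)" unfolding g_def using True g1f zj by simp
        finally show ?thesis .
      next
        case False
        then have z': "z \<in> A - C" using zA by blast
        then have "f z \<in> A - C" using R(4) by blast
        then show ?thesis unfolding g_def using g0(2) z' by simp
      qed
    qed
    then show ?thesis using bij by blast
  qed
qed

definition Dm :: "nat multiset \<Rightarrow> nat \<Rightarrow> nat" where
  "Dm M m = size (filter_mset (\<lambda>d. m dvd d) M)"

lemma Dm_add: "Dm (add_mset x M) m = (if m dvd x then 1 else 0) + Dm M m"
  unfolding Dm_def by simp

lemma Dm_empty: "Dm {#} m = 0" unfolding Dm_def by simp

lemma Dm_1: "Dm M 1 = size M"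
  by (induction M) (simp_all add: Dm_add Dm_empty)

lemma gcd_totient:
  fixes d k :: nat
  assumes "k > 0"
  shows "gcd d k = (\<Sum>m | m dvd k. if m dvd d then totient m else 0)"
proof -
  have fin: "finite {m. m dvd k}" using assms by simp
  have "gcd d k = (\<Sum>m | m dvd gcd d k. totient m)" by (rule totient_divisor_sum[symmetric])
  also have "{m. m dvd gcd d k} = {m \<in> {m. m dvd k}. m dvd d}" by auto
  also have "(\<Sum>m\<in>{m \<in> {m. m dvd k}. m dvd d}. totient m) = (\<Sum>m | m dvd k. if m dvd d then totient m else 0)"
    using sum.inter_filter[OF fin, of totient "\<lambda>m. m dvd d"] by simp
  finally show ?thesis .
qed

lemma sum_gcd:
  fixes k :: nat
  assumes "k > 0"
  shows "(\<Sum>d\<in>#M. gcd d k) = (\<Sum>m | m dvd k. totient m * Dm M m)"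
proof (induction M)
  case empty
  then show ?case by (simp add: Dm_empty)
next
  case (add x M)
  have "(\<Sum>d\<in>#add_mset x M. gcd d k) = gcd x k + (\<Sum>d\<in>#M. gcd d k)" by simp
  also have "\<dots> = (\<Sum>m | m dvd k. if m dvd x then totient m else 0) + (\<Sum>m | m dvd k. totient m * Dm M m)"
    using gcd_totient[OF assms] add by simp
  also have "\<dots> = (\<Sum>m | m dvd k. totient m * Dm (add_mset x M) m)"
    by (auto simp: Dm_add sum.distrib[symmetric] algebra_simps intro!: sum.cong)
  finally show ?case .
qed

lemma Dm_eq:
  assumes H: "\<forall>k>0. (\<Sum>d\<in>#M. gcd d k) = (\<Sum>d\<in>#N. gcd d k)"
  shows "m > 0 \<Longrightarrow> Dm M m = Dm N m"
proof (induction m rule: less_induct)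
  case (less m)
  have fin: "finite {j. j dvd m}" using less.prems by simp
  have mm: "m \<in> {j. j dvd m}" by simp
  have "(\<Sum>j | j dvd m. totient j * Dm M j) = (\<Sum>d\<in>#M. gcd d m)"
    by (rule sum_gcd[OF less.prems, symmetric])
  also have "\<dots> = (\<Sum>d\<in>#N. gcd d m)" using H less.prems by blast
  also have "\<dots> = (\<Sum>j | j dvd m. totient j * Dm N j)"
    by (rule sum_gcd[OF less.prems])
  finally have "(\<Sum>j | j dvd m. totient j * Dm M j) = (\<Sum>j | j dvd m. totient j * Dm N j)" .
  moreover have "(\<Sum>j | j dvd m. totient j * Dm M j) = totient m * Dm M m + (\<Sum>j\<in>{j. j dvd m} - {m}. totient j * Dm M j)"
    by (rule sum.remove[OF fin mm])
  moreover have "(\<Sum>j | j dvd m. totient j * Dm N j) = totient m * Dm N m + (\<Sum>j\<in>{j. j dvd m} - {m}. totient j * Dm N j)"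
    by (rule sum.remove[OF fin mm])
  ultimately have "totient m * Dm M m + (\<Sum>j\<in>{j. j dvd m} - {m}. totient j * Dm M j)
           = totient m * Dm N m + (\<Sum>j\<in>{j. j dvd m} - {m}. totient j * Dm N j)"
    by simp
  moreover have "(\<Sum>j\<in>{j. j dvd m} - {m}. totient j * Dm M j) = (\<Sum>j\<in>{j. j dvd m} - {m}. totient j * Dm N j)"
  proof (rule sum.cong)
    fix j assume "j \<in> {j. j dvd m} - {m}"
    then have "j dvd m" "j \<noteq> m" by auto
    then have "j < m" "j > 0" using less.prems dvd_imp_le[of j m] by (auto intro: Nat.gr0I)
    then show "totient j * Dm M j = totient j * Dm N j" using less.IH by simp
  qed simp
  ultimately have "totient m * Dm M m = totient m * Dm N m" by simp
  then show ?case using less.prems by simp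
qed

lemma Dm_pos_ex: "Dm M m > 0 \<Longrightarrow> \<exists>e. e \<in># M \<and> m dvd e"
  by (induction M) (auto simp: Dm_add Dm_empty split: if_splits)

lemma Dm_pos_mem:
  assumes "e \<in># M" "m dvd e" shows "Dm M m > 0"
proof -
  obtain M' where "M = add_mset e M'" using assms(1) by (metis multi_member_split)
  then show ?thesis using assms(2) by (simp add: Dm_add)
qed

lemma mset_from_Dm:
  "(\<forall>d\<in>#M. d > 0) \<Longrightarrow> (\<forall>d\<in>#N. d > 0) \<Longrightarrow> (\<forall>m>0. Dm M m = Dm N m) \<Longrightarrow> M = N"
proof (induction "size M" arbitrary: M N rule: less_induct)
  case less
  show ?case
  proof (cases "M = {#}")
    case True
    then have "size N = 0" using less.prems(3) Dm_1[of M] Dm_1[of N] by simp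
    then show ?thesis using True by simp
  next
    case False
    have NE: "N \<noteq> {#}" using False less.prems(3) Dm_1[of M] Dm_1[of N] by auto
    define L where "L = Max (set_mset M)"
    define L' where "L' = Max (set_mset N)"
    have LM: "L \<in># M" using False unfolding L_def by simp
    have LN': "L' \<in># N" using NE unfolding L'_def by simp
    have Lmax: "\<And>d. d \<in># M \<Longrightarrow> d \<le> L" unfolding L_def by simp
    have L'max: "\<And>d. d \<in># N \<Longrightarrow> d \<le> L'" unfolding L'_def by simp
    have L0: "L > 0" using LM less.prems(1) by blast
    have L'0: "L' > 0" using LN' less.prems(2) by blast
    have "Dm M L > 0" using Dm_pos_mem[OF LM dvd_refl] .
    then have "Dm N L > 0" using less.prems(3) L0 by simp
    then obtain e where e: "e \<in># N" "L dvd e" using Dm_pos_ex by blast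
    have "Dm N L' > 0" using Dm_pos_mem[OF LN' dvd_refl] .
    then have "Dm M L' > 0" using less.prems(3) L'0 by simp
    then obtain e' where e': "e' \<in># M" "L' dvd e'" using Dm_pos_ex by blast
    have "L' \<le> e'" using e' less.prems(1) dvd_imp_le by blast
    moreover have "e' \<le> L" using Lmax e' by simp
    moreover have "L \<le> e" using e less.prems(2) dvd_imp_le by blast
    moreover have "e \<le> L'" using L'max e by simp
    ultimately have "e = L" by simp
    with e have LN: "L \<in># N" by simp
    obtain M' where M': "M = add_mset L M'" using LM by (metis multi_member_split)
    obtain N' where N': "N = add_mset L N'" using LN by (metis multi_member_split)
    have "\<forall>m>0. Dm M' m = Dm N' m" using less.prems(3) unfolding M' N' Dm_add by simp
    moreover have "size M' < size M" unfolding M' by simp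
    ultimately have "M' = N'" using less.hyps less.prems(1,2) unfolding M' N' by simp
    then show ?thesis using M' N' by simp
  qed
qed

lemma mset_gcd_eq:
  fixes M N :: "nat multiset"
  assumes "\<forall>d\<in>#M. d > 0" "\<forall>d\<in>#N. d > 0"
    "\<forall>k>0. (\<Sum>d\<in>#M. gcd d k) = (\<Sum>d\<in>#N. gcd d k)"
  shows "M = N"
  using mset_from_Dm[OF assms(1,2)] Dm_eq[OF assms(3)] by blast

fun mpow :: "'i set \<Rightarrow> ('i \<Rightarrow> 'i \<Rightarrow> complex) \<Rightarrow> nat \<Rightarrow> ('i \<Rightarrow> 'i \<Rightarrow> complex)" where
  "mpow X A 0 = mat_id_on X"
| "mpow X A (Suc k) = mat_mult_on X A (mpow X A k)"

definition tr :: "'i set \<Rightarrow> ('i \<Rightarrow> 'i \<Rightarrow> complex) \<Rightarrow> complex" where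
  "tr X A = (\<Sum>i\<in>X. A i i)"

lemma mm_assoc: "mat_mult_on X (mat_mult_on X A B) C = mat_mult_on X A (mat_mult_on X B C)"
  unfolding mat_mult_on_def
  by (auto simp: sum_distrib_left sum_distrib_right mult.assoc intro!: ext) (rule sum.swap)

lemma mm_cong: "mat_eq_on X A A' \<Longrightarrow> mat_eq_on X B B' \<Longrightarrow>
   mat_eq_on X (mat_mult_on X A B) (mat_mult_on X A' B')"
  unfolding mat_eq_on_def mat_mult_on_def by (auto intro!: sum.cong)

lemma me_refl: "mat_eq_on X A A" unfolding mat_eq_on_def by simp
lemma me_sym: "mat_eq_on X A B \<Longrightarrow> mat_eq_on X B A" unfolding mat_eq_on_def by simp
lemma me_trans: "mat_eq_on X A B \<Longrightarrow> mat_eq_on X B C \<Longrightarrow> mat_eq_on X A C"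
  unfolding mat_eq_on_def by simp

lemma mm_id_left:
  assumes fin: "finite X" shows "mat_eq_on X (mat_mult_on X (mat_id_on X) A) A"
  unfolding mat_eq_on_def
proof (intro ballI)
  fix i j assume i: "i \<in> X"
  have "mat_mult_on X (mat_id_on X) A i j = (\<Sum>k\<in>X. if i = k then A k j else 0)"
    unfolding mat_mult_on_def mat_id_on_def by (rule sum.cong) auto
  also have "\<dots> = A i j" using sum.delta'[OF fin, of i "\<lambda>k. A k j"] i by simp
  finally show "mat_mult_on X (mat_id_on X) A i j = A i j" .
qed

lemma mm_id_right:
  assumes fin: "finite X" shows "mat_eq_on X (mat_mult_on X A (mat_id_on X)) A"
  unfolding mat_eq_on_def
proof (intro ballI)
  fix i j assume j: "j \<in> X"
  have "mat_mult_on X A (mat_id_on X) i j = (\<Sum>k\<in>X. if k = j then A i k else 0)"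
    unfolding mat_mult_on_def mat_id_on_def by (rule sum.cong) auto
  also have "\<dots> = A i j" using sum.delta[OF fin, of j "\<lambda>k. A i k"] j by simp
  finally show "mat_mult_on X A (mat_id_on X) i j = A i j" .
qed

lemma tr_cong: "mat_eq_on X A B \<Longrightarrow> tr X A = tr X B"
  unfolding mat_eq_on_def tr_def by simp

lemma tr_comm: "tr X (mat_mult_on X A B) = tr X (mat_mult_on X B A)"
  unfolding tr_def mat_mult_on_def by (subst sum.swap) (simp add: mult.commute)

lemma cancel_QP:
  assumes "finite X" "mat_eq_on X (mat_mult_on X Q P) (mat_id_on X)"
  shows "mat_eq_on X (mat_mult_on X Q (mat_mult_on X P Z)) Z"
proof -
  have "mat_eq_on X (mat_mult_on X (mat_mult_on X Q P) Z) (mat_mult_on X (mat_id_on X) Z)"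
    using mm_cong[OF assms(2) me_refl] .
  then show ?thesis unfolding mm_assoc using mm_id_left[OF assms(1)] me_trans by blast
qed

lemma similar_pow:
  assumes fin: "finite X" and PQ: "mat_eq_on X (mat_mult_on X P Q) (mat_id_on X)"
    and QP: "mat_eq_on X (mat_mult_on X Q P) (mat_id_on X)"
    and B: "mat_eq_on X (mat_mult_on X (mat_mult_on X P A) Q) B"
  shows "mat_eq_on X (mat_mult_on X (mat_mult_on X P (mpow X A k)) Q) (mpow X B k)"
proof (induction k)
  case 0
  have "mat_eq_on X (mat_mult_on X (mat_mult_on X P (mat_id_on X)) Q) (mat_mult_on X P Q)"
    using mm_cong[OF mm_id_right[OF fin] me_refl] .
  then show ?case using PQ me_trans by fastforce
next
  case (Suc k)
  have "mat_eq_on X (mat_mult_on X (mat_mult_on X (mat_mult_on X P A) Q) (mat_mult_on X (mat_mult_on X P (mpow X A k)) Q))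
     (mat_mult_on X B (mpow X B k))"
    using mm_cong[OF B Suc] .
  moreover have "mat_eq_on X (mat_mult_on X P (mat_mult_on X A (mat_mult_on X Q (mat_mult_on X P (mat_mult_on X (mpow X A k) Q)))))
     (mat_mult_on X P (mat_mult_on X A (mat_mult_on X (mpow X A k) Q)))"
    using mm_cong[OF me_refl mm_cong[OF me_refl cancel_QP[OF fin QP]]] .
  ultimately show ?case unfolding mm_assoc mpow.simps using me_trans me_sym by metis
qed

lemma similar_tr_pow:
  assumes "finite X" "similar_on X A B"
  shows "tr X (mpow X A k) = tr X (mpow X B k)"
proof -
  obtain P Q where PQ: "mat_eq_on X (mat_mult_on X P Q) (mat_id_on X)"
    and QP: "mat_eq_on X (mat_mult_on X Q P) (mat_id_on X)"
    and B: "mat_eq_on X (mat_mult_on X (mat_mult_on X P A) Q) B"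
    using assms(2) unfolding similar_on_def by blast
  have "tr X (mpow X B k) = tr X (mat_mult_on X (mat_mult_on X P (mpow X A k)) Q)"
    using tr_cong[OF similar_pow[OF assms(1) PQ QP B]] by simp
  also have "\<dots> = tr X (mat_mult_on X Q (mat_mult_on X P (mpow X A k)))" by (rule tr_comm)
  also have "\<dots> = tr X (mpow X A k)" using tr_cong[OF cancel_QP[OF assms(1) QP]] .
  finally show ?thesis by (rule sym)
qed

lemma permutes_funpow:
  assumes p: "p permutes S" shows "(p ^^ k) permutes S"
proof (induction k)
  case 0
  have "(p ^^ 0) = id" by (rule funpow.simps(1))
  then show ?case by (simp only: permutes_id)
next
  case (Suc k)
  have "(p ^^ Suc k) = p \<circ> (p ^^ k)" by (rule funpow.simps(2))
  then show ?case using permutes_compose[OF Suc.IH p] by (simp only:)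
qed

lemma finite_even_subsets: "finite (even_subsets n)"
  unfolding even_subsets_def by (rule finite_subset[of _ "Pow {1..n}"]) auto

lemma even_closed:
  assumes "p permutes {1..n}" "R \<in> even_subsets n"
  shows "p ` R \<in> even_subsets n"
proof -
  have R: "R \<subseteq> {1..n}" "even (card R)" using assms(2) unfolding even_subsets_def by auto
  have s: "p ` R \<subseteq> {1..n}" using R(1) permutes_image[OF assms(1)] by blast
  have "inj_on p R" using permutes_inj[OF assms(1)] by (rule inj_on_subset) simp
  then have c: "card (p ` R) = card R" by (rule card_image)
  have "even (card (p ` R))" unfolding c by (rule R(2))
  then show ?thesis using s unfolding even_subsets_def by blast
qed

lemma mpow_perm:
  assumes "p permutes {1..n}"
  shows "mat_eq_on (even_subsets n) (mpow (even_subsets n) (even_subset_rep p) k) (even_subset_rep (p ^^ k))"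
proof (induction k)
  case 0
  show ?case by (simp add: mat_eq_on_def mat_id_on_def even_subset_rep_def)
next
  case (Suc k)
  let ?X = "even_subsets n"
  have "mat_eq_on ?X (mat_mult_on ?X (even_subset_rep p) (even_subset_rep (p ^^ k))) (even_subset_rep (p ^^ Suc k))"
    unfolding mat_eq_on_def
  proof (intro ballI)
    fix S R assume S: "S \<in> ?X" and R: "R \<in> ?X"
    define V where "V = (p ^^ k) ` R"
    have V: "V \<in> ?X" unfolding V_def using even_closed[OF permutes_funpow[OF assms] R] .
    have "mat_mult_on ?X (even_subset_rep p) (even_subset_rep (p ^^ k)) S R
        = (\<Sum>U\<in>?X. if U = V then (if S = p ` V then 1 else 0) else 0)"
      unfolding mat_mult_on_def even_subset_rep_def V_def by (rule sum.cong) auto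
    also have "\<dots> = (if S = p ` V then 1 else 0)" using V finite_even_subsets by simp
    also have "\<dots> = (if S = (p ^^ Suc k) ` R then 1 else 0)" unfolding V_def by (simp add: image_comp)
    finally show "mat_mult_on ?X (even_subset_rep p) (even_subset_rep (p ^^ k)) S R = even_subset_rep (p ^^ Suc k) S R"
      unfolding even_subset_rep_def .
  qed
  then show ?case using mm_cong[OF me_refl Suc] me_trans by (metis mpow.simps(2))
qed

lemma tr_rep: "tr (even_subsets n) (even_subset_rep p) = of_nat (card {S \<in> even_subsets n. S = p ` S})"
proof -
  have "tr (even_subsets n) (even_subset_rep p) = (\<Sum>S\<in>even_subsets n. if S = p ` S then 1 else 0)"
    unfolding tr_def even_subset_rep_def by simp
  also have "\<dots> = (\<Sum>S\<in>{S \<in> even_subsets n. S = p ` S}. 1)"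
    using sum.inter_filter[OF finite_even_subsets[of n], where g="\<lambda>_. 1::complex" and P="\<lambda>S. S = p ` S"] by simp
  finally show ?thesis by simp
qed

lemma even_half:
  assumes p: "p permutes {1..n}" and n: "odd n"
  shows "2 * card {S \<in> even_subsets n. S = p ` S} = card (invs p {1..n})"
proof -
  let ?A = "{1..n::nat}"
  define E where "E = {S \<in> invs p ?A. even (card S)}"
  define Od where "Od = {S \<in> invs p ?A. odd (card S)}"
  have E': "{S \<in> even_subsets n. S = p ` S} = E"
    unfolding E_def even_subsets_def invs_def by auto
  have un: "invs p ?A = E \<union> Od" "E \<inter> Od = {}" unfolding E_def Od_def by auto
  have fin: "finite (invs p ?A)" unfolding invs_def by (rule finite_subset[of _ "Pow ?A"]) auto
  have inj: "inj p" using permutes_inj[OF p] .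
  have pA: "p ` ?A = ?A" using permutes_image[OF p] .
  have "bij_betw (\<lambda>S. ?A - S) E Od"
  proof (rule bij_betw_byWitness[where f' = "\<lambda>S. ?A - S"])
    show "\<forall>S\<in>E. ?A - (?A - S) = S" unfolding E_def invs_def by auto
    show "\<forall>S\<in>Od. ?A - (?A - S) = S" unfolding Od_def invs_def by auto
    show "(\<lambda>S. ?A - S) ` E \<subseteq> Od"
    proof
      fix T assume "T \<in> (\<lambda>S. ?A - S) ` E"
      then obtain S where S: "S \<in> E" "T = ?A - S" by blast
      then have SA: "S \<subseteq> ?A" "p ` S = S" "even (card S)" unfolding E_def invs_def by auto
      have "p ` T = T" unfolding S(2) image_set_diff[OF inj] pA SA(2) ..
      moreover have "card T = n - card S" unfolding S(2) using SA(1) by (simp add: card_Diff_subset finite_subset)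
      moreover have "card S \<le> n" using SA(1) card_mono[of ?A S] by simp
      ultimately show "T \<in> Od" unfolding Od_def invs_def S(2) using SA n by auto
    qed
    show "(\<lambda>S. ?A - S) ` Od \<subseteq> E"
    proof
      fix T assume "T \<in> (\<lambda>S. ?A - S) ` Od"
      then obtain S where S: "S \<in> Od" "T = ?A - S" by blast
      then have SA: "S \<subseteq> ?A" "p ` S = S" "odd (card S)" unfolding Od_def invs_def by auto
      have "p ` T = T" unfolding S(2) image_set_diff[OF inj] pA SA(2) ..
      moreover have "card T = n - card S" unfolding S(2) using SA(1) by (simp add: card_Diff_subset finite_subset)
      moreover have "card S \<le> n" using SA(1) card_mono[of ?A S] by simp
      ultimately show "T \<in> E" unfolding E_def invs_def S(2) using SA n by auto
    qed
  qed
  then have "card E = card Od" by (rule bij_betw_same_card)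
  moreover have "card (invs p ?A) = card E + card Od"
    using un fin by (simp add: card_Un_disjoint)
  ultimately show ?thesis using E' by simp
qed

theorem theorem3p9:
  fixes n :: nat
  assumes "odd n"
  shows "\<not> unites_conj_classes n (even_subsets n) even_subset_rep"
proof
  assume "unites_conj_classes n (even_subsets n) even_subset_rep"
  then obtain \<sigma> \<tau> where st: "\<sigma> permutes {1..n}" "\<tau> permutes {1..n}" "\<not> conj_Sn n \<sigma> \<tau>"
    "similar_on (even_subsets n) (even_subset_rep \<sigma>) (even_subset_rep \<tau>)"
    unfolding unites_conj_classes_def by blast
  let ?A = "{1..n::nat}"
  let ?X = "even_subsets n"
  have c1: "card {S \<in> ?X. S = (\<sigma> ^^ k) ` S} = card {S \<in> ?X. S = (\<tau> ^^ k) ` S}" for k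
  proof -
    have "tr ?X (mpow ?X (even_subset_rep \<sigma>) k) = tr ?X (mpow ?X (even_subset_rep \<tau>) k)"
      by (rule similar_tr_pow[OF finite_even_subsets st(4)])
    then have "tr ?X (even_subset_rep (\<sigma> ^^ k)) = tr ?X (even_subset_rep (\<tau> ^^ k))"
      using tr_cong[OF mpow_perm[OF st(1)]] tr_cong[OF mpow_perm[OF st(2)]] by simp
    then show ?thesis unfolding tr_rep by simp
  qed
  have c2: "card (invs (\<sigma> ^^ k) ?A) = card (invs (\<tau> ^^ k) ?A)" for k
    using even_half[OF permutes_funpow[OF st(1)] assms, symmetric] even_half[OF permutes_funpow[OF st(2)] assms, symmetric] c1[of k]
    by simp
  have injs: "inj \<sigma>" "inj \<tau>" using permutes_inj st by auto
  have imgs: "\<sigma> ` ?A = ?A" "\<tau> ` ?A = ?A" using permutes_image st by auto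
  have finA: "finite ?A" by simp
  define M where "M = image_mset card (mset_set (cycs \<sigma> ?A))"
  define N where "N = image_mset card (mset_set (cycs \<tau> ?A))"
  have sumM: "(\<Sum>C\<in>cycs \<sigma> ?A. gcd (card C) k) = (\<Sum>d\<in>#M. gcd d k)" for k
    unfolding M_def sum_unfold_sum_mset[of _ "cycs \<sigma> ?A"] by (simp add: image_mset.compositionality comp_def)
  have sumN: "(\<Sum>C\<in>cycs \<tau> ?A. gcd (card C) k) = (\<Sum>d\<in>#N. gcd d k)" for k
    unfolding N_def sum_unfold_sum_mset[of _ "cycs \<tau> ?A"] by (simp add: image_mset.compositionality comp_def)
  have sums: "\<forall>k>0. (\<Sum>d\<in>#M. gcd d k) = (\<Sum>d\<in>#N. gcd d k)"
  proof (intro allI impI)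
    fix k :: nat assume k: "k > 0"
    have "(2::nat) ^ (\<Sum>d\<in>#M. gcd d k) = 2 ^ (\<Sum>d\<in>#N. gcd d k)"
      using invs_count[OF injs(1) imgs(1) finA k] invs_count[OF injs(2) imgs(2) finA k] c2[of k]
      unfolding sumM sumN by simp
    then show "(\<Sum>d\<in>#M. gcd d k) = (\<Sum>d\<in>#N. gcd d k)" by (simp add: power_inject_exp)
  qed
  have pos: "\<forall>d\<in>#image_mset card (mset_set (cycs f ?A)). d > 0"
    if "inj f" "f ` ?A = ?A" for f :: "nat \<Rightarrow> nat"
  proof
    fix d assume "d \<in># image_mset card (mset_set (cycs f ?A))"
    then obtain x where x: "x \<in> ?A" "d = card (orb f x)"
      using finite_cycs[OF finA] unfolding cycs_def by auto
    show "d > 0" using orb_facts[OF that(1) remove_cycle(2)[OF that finA x(1)]] x(2) by simp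
  qed
  have "M = N"
    using mset_gcd_eq[OF pos[OF injs(1) imgs(1), folded M_def] pos[OF injs(2) imgs(2), folded N_def] sums] .
  then obtain g where g: "bij_betw g ?A ?A" "\<forall>z\<in>?A. g (\<sigma> z) = \<tau> (g z)"
    using iso[OF injs imgs(1) finA imgs(2) finA] unfolding M_def N_def by blast
  define g' where "g' z = (if z \<in> ?A then g z else z)" for z
  have gp: "g' permutes ?A"
  proof (rule bij_imp_permutes)
    show "bij_betw g' ?A ?A" using g(1) by (rule bij_betw_cong[THEN iffD1, rotated]) (simp add: g'_def)
    show "\<And>x. x \<notin> ?A \<Longrightarrow> g' x = x" unfolding g'_def by auto
  qed
  have comm: "g' (\<sigma> z) = \<tau> (g' z)" for z
  proof (cases "z \<in> ?A")
    case True
    then have "\<sigma> z \<in> ?A" using permutes_in_image[OF st(1)] by blast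
    then show ?thesis using True g(2) by (simp add: g'_def)
  next
    case False
    then show ?thesis using permutes_not_in[OF st(1) False] permutes_not_in[OF st(2) False]
      unfolding g'_def by auto
  qed
  have "\<tau> = g' \<circ> \<sigma> \<circ> inv_into UNIV g'"
  proof
    fix y
    show "\<tau> y = (g' \<circ> \<sigma> \<circ> inv_into UNIV g') y"
      using comm[of "inv_into UNIV g' y"] permutes_inverses(1)[OF gp, of y] by simp
  qed
  then have "conj_Sn n \<sigma> \<tau>" unfolding conj_Sn_def using gp by blast
  with st(3) show False ..
qed

end
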